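(* Let $\beta\in\mathbb R$, $1<q<\infty$ and $f\in\mathbb M_+^2\cap\mathbb W_\infty^{\beta,\beta}$. Then \[ \omega_\varphi^2(f,\delta)_{w_{\beta,\beta},q}\le c\,\delta^{2/q}\|w_{\beta,\beta}f\|_\infty, \] with $c$ independent of $f$ and $\delta$.
   Context: For $x\in[-1,1]$, $\varphi(x)=\sqrt{1-x^2}$ and $w_{\beta,\beta}(x)=(1-x^2)^\beta$; $\|\cdot\|_\infty$ is the $L_\infty[-1,1]$ norm, $\|g\|_{L_q(S)}$ the $L_q$ norm over $S$; $\mathbb W_\infty^{\beta,\beta}=\{f:\|w_{\beta,\beta}f\|_\infty<\infty\}$. $\Delta_h^2(f,x)=f(x-h)-2f(x)+f(x+h)$ if $x\pm h\in[-1,1]$, else $0$; $\overrightarrow\Delta_h^2(f,x)=\Delta_h^2(f,x+h)$, $\overleftarrow\Delta_h^2(f,x)=\Delta_h^2(f,x-h)$. For a weight $w$: $\Omega_\varphi^2(f,\delta)_{w,q}=\sup_{0<h\le\delta}\|w(x)\Delta^2_{h\varphi(x)}(f,x)\|_{L_q[-1+8h^2,1-8h^2]}$, $\overrightarrow\Omega_\varphi^2(f,\delta)_{w,q}=\sup_{0<h\le8\delta^2}\|w\overrightarrow\Delta_h^2(f,\cdot)\|_{L_q[-1,-1+8\delta^2]}$, $\overleftarrow\Omega_\varphi^2(f,\delta)_{w,q}=\sup_{0<h\le8\delta^2}\|w\overleftarrow\Delta_h^2(f,\cdot)\|_{L_q[1-8\delta^2,1]}$, $\omega_\varphi^2=\Omega_\varphi^2+\overrightarrow\Omega_\varphi^2+\overleftarrow\Omega_\varphi^2$.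 $\mathbb M_+^2$ is the set of convex functions $f$ on $(-1,1)$ with $f(x)=0$ for all $x\in(-1,0]$. *)

theory Defs
  imports "HOL-Analysis.Analysis"
begin

definition phi :: "real \<Rightarrow> real" where
  "phi x = sqrt (1 - x\<^sup>2)"

definition wbb :: "real \<Rightarrow> real \<Rightarrow> real" where
  "wbb \<beta> x = (1 - x\<^sup>2) powr \<beta>"

definition Delta2 :: "(real \<Rightarrow> real) \<Rightarrow> real \<Rightarrow> real \<Rightarrow> real" where
  "Delta2 f h x = (if x - h \<in> {-1..1} \<and> x + h \<in> {-1..1}
                   then f (x - h) - 2 * f x + f (x + h) else 0)"

definition Delta2_fwd :: "(real \<Rightarrow> real) \<Rightarrow> real \<Rightarrow> real \<Rightarrow> real" where
  "Delta2_fwd f h x = Delta2 f h (x + h)"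

definition Delta2_bwd :: "(real \<Rightarrow> real) \<Rightarrow> real \<Rightarrow> real \<Rightarrow> real" where
  "Delta2_bwd f h x = Delta2 f h (x - h)"

definition Lq_norm :: "real set \<Rightarrow> real \<Rightarrow> (real \<Rightarrow> real) \<Rightarrow> ennreal" where
  "Lq_norm S q g =
     (let I = (\<integral>\<^sup>+ x. indicator S x * ennreal (\<bar>g x\<bar> powr q) \<partial>lborel)
      in if I = \<infinity> then \<infinity> else ennreal (enn2real I powr (1 / q)))"

text \<open>Sup norm of w_{beta,beta} f on (-1,1) (f is only given on (-1,1))\<close>
definition wsup_norm :: "real \<Rightarrow> (real \<Rightarrow> real) \<Rightarrow> real" where
  "wsup_norm \<beta> f = (SUP x\<in>{-1<..<1}. \<bar>wbb \<beta> x * f x\<bar>)"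

definition in_W_inf :: "real \<Rightarrow> (real \<Rightarrow> real) \<Rightarrow> bool" where
  "in_W_inf \<beta> f \<longleftrightarrow> bdd_above ((\<lambda>x. \<bar>wbb \<beta> x * f x\<bar>) ` {-1<..<1})"

definition in_M2plus :: "(real \<Rightarrow> real) \<Rightarrow> bool" where
  "in_M2plus f \<longleftrightarrow> convex_on {-1<..<1} f \<and> (\<forall>x\<in>{-1<..0}. f x = 0)"

definition Omega_main :: "real \<Rightarrow> real \<Rightarrow> (real \<Rightarrow> real) \<Rightarrow> real \<Rightarrow> ennreal" where
  "Omega_main \<beta> q f \<delta> = (SUP h\<in>{0<..\<delta>}.
      Lq_norm {-1 + 8 * h\<^sup>2 .. 1 - 8 * h\<^sup>2} q (\<lambda>x. wbb \<beta> x * Delta2 f (h * phi x) x))"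

definition Omega_fwd :: "real \<Rightarrow> real \<Rightarrow> (real \<Rightarrow> real) \<Rightarrow> real \<Rightarrow> ennreal" where
  "Omega_fwd \<beta> q f \<delta> = (SUP h\<in>{0<..8 * \<delta>\<^sup>2}.
      Lq_norm {-1 .. -1 + 8 * \<delta>\<^sup>2} q (\<lambda>x. wbb \<beta> x * Delta2_fwd f h x))"

definition Omega_bwd :: "real \<Rightarrow> real \<Rightarrow> (real \<Rightarrow> real) \<Rightarrow> real \<Rightarrow> ennreal" where
  "Omega_bwd \<beta> q f \<delta> = (SUP h\<in>{0<..8 * \<delta>\<^sup>2}.
      Lq_norm {1 - 8 * \<delta>\<^sup>2 .. 1} q (\<lambda>x. wbb \<beta> x * Delta2_bwd f h x))"

definition omega_phi2 :: "real \<Rightarrow> real \<Rightarrow> (real \<Rightarrow> real) \<Rightarrow> real \<Rightarrow> ennreal" where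
  "omega_phi2 \<beta> q f \<delta> = Omega_main \<beta> q f \<delta> + Omega_fwd \<beta> q f \<delta> + Omega_bwd \<beta> q f \<delta>"

end

theory Submission
  imports Defs
begin


lemma wbb_nonneg: "0 \<le> wbb \<beta> x" by (simp add: wbb_def)
lemma wbb_one: "wbb \<beta> 1 = 0" "wbb \<beta> (-1) = 0" by (simp_all add: wbb_def)

lemma phi_sq: assumes "\<bar>x\<bar> \<le> 1" shows "(phi x)^2 = 1 - x^2"
proof -
  have "x^2 \<le> 1" using assms by (simp add: abs_square_le_1)
  then show ?thesis by (simp add: phi_def)
qed
lemma phi_nonneg: assumes "\<bar>x\<bar> \<le> 1" shows "0 \<le> phi x"
proof -
  have "x^2 \<le> 1" using assms by (simp add: abs_square_le_1)
  then show ?thesis by (simp add: phi_def)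
qed
lemma phi_le1: "phi x \<le> 1"
proof -
  have "sqrt (1 - x^2) \<le> sqrt 1" by (intro real_sqrt_le_mono) simp
  then show ?thesis by (simp add: phi_def)
qed

locale cvx =
  fixes f :: "real \<Rightarrow> real"
  assumes cv: "convex_on {-1<..<1} f"
    and z: "\<And>x. -1 < x \<Longrightarrow> x \<le> 0 \<Longrightarrow> f x = 0"
begin

lemma chord:
  assumes "-1 < x" "z < 1" "x \<le> y" "y \<le> z" "x < z"
  shows "f y * (z - x) \<le> (z - y) * f x + (y - x) * f z"
proof -
  define t where "t = (y - x) / (z - x)"
  have t0: "0 \<le> t" "t \<le> 1" using assms by (auto simp: t_def field_simps)
  have tt: "t * (z - x) = y - x" using assms by (simp add: t_def)
  have yy: "y = (1 - t) *\<^sub>R x + t *\<^sub>R z" using tt by (simp add: algebra_simps)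
  have "f y \<le> (1 - t) * f x + t * f z"
    unfolding yy by (rule convex_onD[OF cv]) (use t0 assms in auto)
  then have "f y * (z - x) \<le> ((1 - t) * f x + t * f z) * (z - x)"
    using assms by (intro mult_right_mono) auto
  also have "\<dots> = (z-x) * f x - (t*(z-x)) * f x + (t*(z-x)) * f z" by (simp add: algebra_simps)
  also have "\<dots> = (z - y) * f x + (y - x) * f z"
    unfolding tt by (simp add: algebra_simps)
  finally show ?thesis .
qed

lemma nonneg: assumes "-1 < y" "y < 1" shows "0 \<le> f y"
proof (cases "y \<le> 0")
  case True then show ?thesis using z assms by simp
next
  case False
  have "f 0 * (y - (-1/2)) \<le> (y - 0) * f (-1/2) + (0 - (-1/2)) * f y"
    using False assms by (intro chord) auto
  then show ?thesis using False z[of 0] z[of "-1/2"] by simp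
qed

lemma mono: assumes "-1 < x" "x \<le> y" "y < 1" shows "f x \<le> f y"
proof (cases "x \<le> 0")
  case True then show ?thesis using z[of x] nonneg[of y] assms by simp
next
  case False
  have "f x * (y - 0) \<le> (y - x) * f 0 + (x - 0) * f y"
    using False assms by (intro chord) auto
  then have "f x * y \<le> x * f y" using z[of 0] by simp
  also have "\<dots> \<le> y * f y" using assms False nonneg[of y] by (intro mult_right_mono) auto
  finally show ?thesis using False assms by simp
qed

lemma incr:
  assumes "-1 < y" "y \<le> b" "b + T < 1" "0 \<le> T"
  shows "f (y + T) - f y \<le> f (b + T) - f b"
proof (cases "T = 0 \<or> y = b")
  case True then show ?thesis by auto
next
  case False
  then have T: "T > 0" "y < b" using assms by auto
  have I: "y \<in> {-1<..<1}" "b + T \<in> {-1<..<1}" using assms T by auto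
  have s1: "(f y - f (y+T)) / (y - (y+T)) \<le> (f y - f (b+T)) / (y - (b+T))"
    by (rule convex_on_slope_le(1)[OF cv I]) (use T in auto)
  have s2: "(f y - f (b+T)) / (y - (b+T)) \<le> (f b - f (b+T)) / (b - (b+T))"
    by (rule convex_on_slope_le(2)[OF cv I]) (use T in auto)
  have "(f y - f (y+T)) / (-T) \<le> (f b - f (b+T)) / (-T)" using s1 s2 by simp
  then have "T * (f b + f (T + y)) \<le> T * (f y + f (T + b))" using T by (simp add: field_simps)
  then have "f b + f (T + y) \<le> f y + f (T + b)" using T by simp
  then show ?thesis by (simp add: add.commute)
qed

lemma cont: "continuous_on {-1<..<1} f"
  using convex_on_continuous[OF _ cv] by simp

end


lemma Lq_pt:
  assumes q: "0 < q" and B: "0 \<le> B" and ab: "a \<le> b" and g: "\<And>x. x \<in> {a..b} \<Longrightarrow> \<bar>g x\<bar> \<le> B"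
  shows "Lq_norm {a..b} q g \<le> ennreal (B * (b - a) powr (1/q))"
proof -
  define I where "I = (\<integral>\<^sup>+ x. indicator {a..b} x * ennreal (\<bar>g x\<bar> powr q) \<partial>lborel)"
  have "I \<le> (\<integral>\<^sup>+ x. ennreal (B powr q) * indicator {a..b} x \<partial>lborel)"
    unfolding I_def
  proof (intro nn_integral_mono)
    fix x
    show "indicator {a..b} x * ennreal (\<bar>g x\<bar> powr q) \<le> ennreal (B powr q) * indicator {a..b} x"
    proof (cases "x \<in> {a..b}")
      case True
      then have "\<bar>g x\<bar> powr q \<le> B powr q" using g q by (intro powr_mono2) auto
      then show ?thesis using True by (simp add: ennreal_leI)
    qed simp
  qed
  also have "\<dots> = ennreal (B powr q) * ennreal (b - a)"
    by (subst nn_integral_cmult_indicator) (use ab in auto)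
  also have "\<dots> = ennreal (B powr q * (b - a))" using ab by (simp add: ennreal_mult)
  finally have I1: "I \<le> ennreal (B powr q * (b - a))" .
  then have Ifin: "I \<noteq> \<infinity>" using ennreal_less_top[of "B powr q * (b - a)"] by (auto simp: top_unique)
  have "enn2real I \<le> B powr q * (b - a)"
    using enn2real_mono[OF I1] ab by simp
  then have "enn2real I powr (1/q) \<le> (B powr q * (b - a)) powr (1/q)"
    using q by (intro powr_mono2) auto
  also have "\<dots> = B * (b - a) powr (1/q)"
    using q B ab by (simp add: powr_mult powr_powr)
  finally show ?thesis
    unfolding Lq_norm_def Let_def I_def[symmetric] using Ifin by (simp add: ennreal_leI)
qed

lemma Lq_int:
  assumes q: "0 < q" and ab: "a \<le> b" and G: "\<And>x. x \<in> {a..b} \<Longrightarrow> \<bar>g x\<bar> powr q = G x"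
    and cG: "continuous_on {a..b} G" and K: "integral {a..b} G \<le> K"
  shows "Lq_norm {a..b} q g \<le> ennreal (K powr (1/q))"
proof -
  have int: "(G has_integral (integral {a..b} G)) {a..b}"
    using integrable_continuous_real[OF cG] by (simp add: has_integral_integral)
  have Gn: "\<And>x. x \<in> {a..b} \<Longrightarrow> 0 \<le> G x" using G by (metis powr_ge_zero)
  have "(\<integral>\<^sup>+ x. indicator {a..b} x * ennreal (\<bar>g x\<bar> powr q) \<partial>lborel)
      = (\<integral>\<^sup>+ x. ennreal (indicator {a..b} x * G x) \<partial>lborel)"
    by (intro nn_integral_cong) (auto simp: G split: split_indicator)
  also have "\<dots> = ennreal (integral {a..b} G)"
    using nn_integral_has_integral_lebesgue[OF Gn int] by simp
  finally have eq: "(\<integral>\<^sup>+ x. indicator {a..b} x * ennreal (\<bar>g x\<bar> powr q) \<partial>lborel) = ennreal (integral {a..b} G)" .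
  have i0: "0 \<le> integral {a..b} G" using Gn by (intro integral_nonneg integrable_continuous_real[OF cG]) auto
  have "integral {a..b} G powr (1/q) \<le> K powr (1/q)" using i0 K q by (intro powr_mono2) auto
  then show ?thesis unfolding Lq_norm_def Let_def eq using i0 by (simp add: ennreal_leI)
qed



locale cvxw = cvx +
  fixes \<beta> M :: real
  assumes wb: "\<And>y. -1 < y \<Longrightarrow> y < 1 \<Longrightarrow> wbb \<beta> y * f y \<le> M"
begin

lemma wpos: assumes "-1 < y" "y < 1" shows "0 < wbb \<beta> y"
proof -
  have "\<bar>y\<bar> < 1" using assms by auto
  then have "y^2 < 1" by (simp add: abs_square_less_1)
  then show ?thesis unfolding wbb_def by simp
qed

lemma M0: "0 \<le> M" using wb[of 0] z[of 0] by simp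

lemma bwd_pt:
  assumes d: "0 < \<delta>" "\<delta> \<le> 1/4" and h: "0 < h" "h \<le> 8 * \<delta>^2" and x: "x \<in> {1 - 8*\<delta>^2 .. 1}"
  shows "\<bar>wbb \<beta> x * Delta2_bwd f h x\<bar> \<le> 2 * M"
proof (cases "x = 1")
  case True then show ?thesis using M0 by (simp add: wbb_one)
next
  case False
  have d2: "8 * \<delta>^2 \<le> 1/2"
  proof -
    have "\<delta> * \<delta> \<le> (1/4) * (1/4)" using d by (intro mult_mono) auto
    then show ?thesis by (simp add: power2_eq_square)
  qed
  have x1: "x < 1" "1/2 \<le> x" using x False d2 by auto
  have p: "-1 < x - h - h" using x1 h d2 by auto
  have D: "Delta2_bwd f h x = f (x - h - h) - 2 * f (x - h) + f x"
    unfolding Delta2_bwd_def Delta2_def using p x1 h by auto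
  have a1: "0 \<le> f (x - h - h)" using p x1 h by (intro nonneg) auto
  have a2: "f (x - h - h) \<le> f x" using p x1 h by (intro mono) auto
  have a3: "0 \<le> f (x - h)" using p x1 h by (intro nonneg) auto
  have a4: "f (x - h) \<le> f x" using p x1 h by (intro mono) auto
  have "\<bar>Delta2_bwd f h x\<bar> \<le> 2 * f x" unfolding D using a1 a2 a3 a4 by linarith
  then have "\<bar>wbb \<beta> x * Delta2_bwd f h x\<bar> \<le> wbb \<beta> x * (2 * f x)"
    using wbb_nonneg[of \<beta> x] by (simp add: abs_mult mult_left_mono)
  also have "\<dots> \<le> 2 * M" using wb[of x] x1 by simp
  finally show ?thesis .
qed

lemma fwd_pt:
  assumes b: "0 \<le> \<beta>" and d: "0 < \<delta>" "\<delta> \<le> 1/4" and h: "0 < h" "h \<le> 8 * \<delta>^2" and x: "x \<in> {-1 .. -1 + 8*\<delta>^2}"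
  shows "\<bar>wbb \<beta> x * Delta2_fwd f h x\<bar> \<le> 3 * (M / (3/4) powr \<beta>)"
proof (cases "x = -1")
  case True then show ?thesis using M0 by (simp add: wbb_one)
next
  case False
  have d2: "8 * \<delta>^2 \<le> 1/2"
  proof -
    have "\<delta> * \<delta> \<le> (1/4) * (1/4)" using d by (intro mult_mono) auto
    then show ?thesis by (simp add: power2_eq_square)
  qed
  have x1: "-1 < x" "x \<le> -1/2" using x False d2 by auto
  have p: "x + h + h \<le> 1/2" using x h d2 by auto
  have D: "Delta2_fwd f h x = f x - 2 * f (x + h) + f (x + h + h)"
    unfolding Delta2_fwd_def Delta2_def using p x1 h by auto
  have f12: "f (1/2) \<le> M / (3/4) powr \<beta>"
  proof -
    have "wbb \<beta> (1/2) = (3/4) powr \<beta>" by (simp add: wbb_def power2_eq_square)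
    then show ?thesis using wb[of "1/2"] by (simp add: field_simps)
  qed
  have a0: "f x = 0" using x1 z by simp
  have a1: "0 \<le> f (x + h + h)" using p x1 h by (intro nonneg) auto
  have a2: "f (x + h + h) \<le> f (1/2)" using p x1 h by (intro mono) auto
  have a3: "0 \<le> f (x + h)" using p x1 h by (intro nonneg) auto
  have a4: "f (x + h) \<le> f (1/2)" using p x1 h by (intro mono) auto
  have "\<bar>Delta2_fwd f h x\<bar> \<le> 3 * f (1/2)" unfolding D using a0 a1 a2 a3 a4 by linarith
  moreover have "wbb \<beta> x \<le> 1"
  proof -
    have "0 \<le> 1 - x^2" "1 - x^2 \<le> 1" using x1 by (auto simp: abs_square_le_1)
    then show ?thesis unfolding wbb_def using b by (simp add: powr_le1)
  qed
  ultimately have "\<bar>wbb \<beta> x * Delta2_fwd f h x\<bar> \<le> 1 * (3 * f (1/2))"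
    using wbb_nonneg[of \<beta> x] unfolding abs_mult by (intro mult_mono) auto
  also have "\<dots> \<le> 3 * (M / (3/4) powr \<beta>)" using f12 by simp
  finally show ?thesis .
qed

end


context cvx begin

lemma mid_nonneg:
  assumes "-1 < x - s" "x + s < 1" "0 \<le> s"
  shows "0 \<le> f (x - s) - 2 * f x + f (x + s)"
proof (cases "s = 0")
  case True then show ?thesis by simp
next
  case False
  have "f x * ((x + s) - (x - s)) \<le> ((x + s) - x) * f (x - s) + (x - (x - s)) * f (x + s)"
    using assms False by (intro chord) auto
  then have "s * (2 * f x) \<le> s * (f (x - s) + f (x + s))" by (simp add: algebra_simps)
  then have "2 * f x \<le> f (x - s) + f (x + s)" using assms False by simp
  then show ?thesis by simp
qed

lemma step_mono:
  assumes "-1 < x - T" "x + T < 1" "0 \<le> s" "s \<le> T"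
  shows "f (x - s) - 2 * f x + f (x + s) \<le> f (x - T) - 2 * f x + f (x + T)"
proof (cases "s = T")
  case True then show ?thesis by simp
next
  case False
  then have sT: "s < T" using assms by simp
  have c1: "f (x + s) * ((x + T) - x) \<le> ((x + T) - (x + s)) * f x + ((x + s) - x) * f (x + T)"
    using assms sT by (intro chord) auto
  have c2: "f (x - s) * (x - (x - T)) \<le> (x - (x - s)) * f (x - T) + ((x - s) - (x - T)) * f x"
    using assms sT by (intro chord) auto
  have m: "0 \<le> f (x - T) - 2 * f x + f (x + T)" using assms by (intro mid_nonneg) auto
  have "T * (f (x - s) - 2 * f x + f (x + s)) \<le> s * (f (x - T) - 2 * f x + f (x + T))"
    using c1 c2 by (simp add: algebra_simps)
  also have "\<dots> \<le> T * (f (x - T) - 2 * f x + f (x + T))"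
    using m assms by (intro mult_right_mono) auto
  finally show ?thesis using sT assms by simp
qed

end

locale mt = cvxw +
  fixes h :: real
  assumes b0: "0 \<le> \<beta>" and h0: "0 < h" and h1: "h \<le> 1/4"
begin

definition tt :: "real \<Rightarrow> real" where "tt x = h * phi x"
definition EE :: "real \<Rightarrow> real" where "EE x = f (x - tt x) - 2 * f x + f (x + tt x)"
definition gg :: "real \<Rightarrow> real" where "gg x = wbb \<beta> x * EE x"
definition AA :: real where "AA = 2 * sqrt 2 * 2 powr \<beta> * M"

lemma AA0: "0 \<le> AA" using M0 by (simp add: AA_def)

lemma tt_sq: assumes "-1 \<le> x" "x \<le> 1" shows "(tt x)^2 = h^2 * ((1 - x) * (1 + x))" "0 \<le> tt x"
proof -
  have "\<bar>x\<bar> \<le> 1" using assms by auto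
  have "(tt x)^2 = h^2 * (phi x)^2" by (simp add: tt_def power_mult_distrib)
  also have "\<dots> = h^2 * (1 - x^2)" using phi_sq[OF \<open>\<bar>x\<bar> \<le> 1\<close>] by simp
  also have "\<dots> = h^2 * ((1 - x) * (1 + x))" by (simp add: algebra_simps power2_eq_square)
  finally show "(tt x)^2 = h^2 * ((1 - x) * (1 + x))" .
  show "0 \<le> tt x" using phi_nonneg[OF \<open>\<bar>x\<bar> \<le> 1\<close>] h0 by (simp add: tt_def)
qed

lemma tt_le_h: assumes "-1 \<le> x" "x \<le> 1" shows "tt x \<le> h"
  using phi_le1[of x] h0 by (simp add: tt_def mult_left_le)

lemma tt_R: assumes "-1 + 8*h^2 \<le> x" "x \<le> 1 - 8*h^2"
  shows "tt x \<le> (1 - x) / 2" "tt x \<le> (1 + x) / 2"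
proof -
  have hh: "0 \<le> 8*h^2" by simp
  have x1: "-1 \<le> x" using assms(1) hh by linarith
  have x2: "x \<le> 1" using assms(2) hh by linarith
  note x = x1 x2
  have t0: "0 \<le> tt x" using tt_sq(2)[OF x] .
  have e1: "(tt x)^2 = h^2 * ((1 - x) * (1 + x))" using tt_sq(1)[OF x] .
  have e2: "h^2 * ((1 - x) * (1 + x)) \<le> h^2 * ((1 - x) * 2)"
    by (intro mult_left_mono) (use x in auto)
  have e1': "(tt x)^2 = h^2 * ((1 + x) * (1 - x))" using e1 by (simp add: mult.commute)
  have e2': "h^2 * ((1 + x) * (1 - x)) \<le> h^2 * ((1 + x) * 2)"
    by (intro mult_left_mono) (use x in auto)
  have e3: "h^2 * ((1 - x) * 2) = ((8*h^2) * (1 - x)) / 4" by simp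
  have e3': "h^2 * ((1 + x) * 2) = ((8*h^2) * (1 + x)) / 4" by simp
  have e4: "(8*h^2) * (1 - x) \<le> (1 - x) * (1 - x)"
    by (intro mult_right_mono) (use assms x in auto)
  have e4': "(8*h^2) * (1 + x) \<le> (1 + x) * (1 + x)"
    by (intro mult_right_mono) (use assms x in auto)
  have e5: "((1 - x) / 2)^2 = (1 - x) * (1 - x) / 4" by (simp add: power2_eq_square)
  have e5': "((1 + x) / 2)^2 = (1 + x) * (1 + x) / 4" by (simp add: power2_eq_square)
  have "(tt x)^2 \<le> ((1 - x) / 2)^2" using e1 e2 e3 e4 e5 by linarith
  then show "tt x \<le> (1 - x) / 2" by (rule power2_le_imp_le) (use x in auto)
  have "(tt x)^2 \<le> ((1 + x) / 2)^2" using e1' e2' e3' e4' e5' by linarith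
  then show "tt x \<le> (1 + x) / 2" by (rule power2_le_imp_le) (use x in auto)
qed

lemma R_pts: assumes "-1 + 8*h^2 \<le> x" "x \<le> 1 - 8*h^2"
  shows "-1 < x - tt x" "x + tt x < 1" "-1 < x" "x < 1" "0 \<le> tt x"
proof -
  have hp: "0 < 8 * h^2" using h0 by simp
  show x: "-1 < x" "x < 1" using assms hp by linarith+
  show "-1 < x - tt x" "x + tt x < 1" using tt_R[OF assms] x by auto
  show "0 \<le> tt x" using tt_sq(2)[of x] x by linarith
qed

lemma Delta_eq: assumes "-1 + 8*h^2 \<le> x" "x \<le> 1 - 8*h^2"
  shows "Delta2 f (h * phi x) x = EE x"
  using R_pts[OF assms] unfolding Delta2_def EE_def tt_def by auto

lemma EE_nonneg: assumes "-1 + 8*h^2 \<le> x" "x \<le> 1 - 8*h^2" shows "0 \<le> EE x"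
  using R_pts[OF assms] unfolding EE_def by (intro mid_nonneg) auto

lemma gg_nonneg: assumes "-1 + 8*h^2 \<le> x" "x \<le> 1 - 8*h^2" shows "0 \<le> gg x"
  using EE_nonneg[OF assms] wbb_nonneg unfolding gg_def by simp

lemma EE_zero: assumes "-1 + 8*h^2 \<le> x" "x \<le> -h" shows "EE x = 0"
proof -
  have x2: "x \<le> 1 - 8*h^2" using assms h0 h1 by (simp add: power2_eq_square)
  note p = R_pts[OF assms(1) x2]
  have "tt x \<le> h" using tt_le_h p by auto
  then show ?thesis unfolding EE_def using p assms z by auto
qed

end


context mt begin

lemma w_cmp: assumes "-1 < x" "x < 1" "1 - x^2 \<le> c * (1 - y^2)" "0 \<le> c"
  shows "wbb \<beta> x \<le> c powr \<beta> * wbb \<beta> y"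
proof -
  have "0 \<le> 1 - x^2"
  proof -
    have "\<bar>x\<bar> \<le> 1" using assms by auto
    then show ?thesis by (simp add: abs_square_le_1)
  qed
  then have "(1 - x^2) powr \<beta> \<le> (c * (1 - y^2)) powr \<beta>" using assms b0 by (intro powr_mono2) auto
  then show ?thesis by (simp add: wbb_def powr_mult)
qed

lemma gg_bound:
  assumes x: "-1 + 8*h^2 \<le> x" "x \<le> 1 - 8*h^2" and u: "0 < u" "u \<le> 1 - x"
  shows "gg x \<le> AA * h / sqrt u"
proof -
  note p = R_pts[OF x]
  define s where "s = (1 + x) / 2"
  define t where "t = tt x"
  define c where "c = h * sqrt 2 / sqrt u"
  have c0: "0 \<le> c" using h0 u by (simp add: c_def)
  have tl: "t \<le> (1 - x) / 2" using tt_R[OF x] by (simp add: t_def)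
  have t0: "0 \<le> t" using p by (simp add: t_def)
  have s1: "x + t \<le> s" "s < 1" "x < s" using tl p by (auto simp: s_def)
  have ch: "f (x + t) * (s - x) \<le> (s - (x + t)) * f x + ((x + t) - x) * f s"
    using p s1 t0 by (intro chord) auto
  have fx: "0 \<le> f x" using p by (intro nonneg) auto
  have fs: "0 \<le> f s" using p s1 by (intro nonneg) auto
  have m: "f (x - t) \<le> f x" using p t0 by (intro mono) (auto simp: t_def)
  have E1: "EE x \<le> f (x + t) - f x" using m by (simp add: EE_def t_def)
  have "(f (x + t) - f x) * (s - x) \<le> t * f s - t * f x" using ch by (simp add: algebra_simps)
  also have "\<dots> \<le> t * f s" using t0 fx by simp
  finally have E2: "(f (x + t) - f x) * ((1 - x) / 2) \<le> t * f s" by (simp add: s_def field_simps)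
  have T1: "t \<le> c * (1 - x)"
  proof -
    have csq: "c^2 = 2 * h^2 / u"
      using u by (simp add: c_def power_divide power_mult_distrib)
    have "t^2 = h^2 * ((1 - x) * (1 + x))" using tt_sq[of x] p by (simp add: t_def)
    also have "\<dots> \<le> h^2 * ((1 - x) * 2)" by (intro mult_left_mono) (use p in auto)
    also have "\<dots> \<le> h^2 * ((1 - x) * 2) * ((1 - x) / u)"
    proof -
      have "1 \<le> (1 - x) / u" using u by simp
      moreover have "0 \<le> h^2 * ((1 - x) * 2)" using p by simp
      ultimately have "h^2 * ((1 - x) * 2) * 1 \<le> h^2 * ((1 - x) * 2) * ((1 - x) / u)"
        by (intro mult_left_mono)
      then show ?thesis by simp
    qed
    also have "\<dots> = (2 * h^2 / u) * (1 - x)^2" by (simp add: power2_eq_square)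
    also have "\<dots> = (c * (1 - x))^2" by (simp add: csq power_mult_distrib)
    finally have "t^2 \<le> (c * (1 - x))^2" .
    then show ?thesis by (rule power2_le_imp_le) (use c0 p in auto)
  qed
  have W1: "wbb \<beta> x \<le> 2 powr \<beta> * wbb \<beta> s"
  proof (rule w_cmp)
    have "2 * (1 - s^2) - (1 - x^2) = (1 - x)^2 / 2" by (simp add: s_def power2_eq_square field_simps)
    moreover have "0 \<le> (1 - x)^2 / 2" by simp
    ultimately show "1 - x^2 \<le> 2 * (1 - s^2)" by linarith
  qed (use p in auto)
  have ws: "wbb \<beta> s * f s \<le> M" using wb[of s] p s1 by auto
  have "EE x * ((1 - x) / 2) \<le> (f (x + t) - f x) * ((1 - x) / 2)"
    by (rule mult_right_mono[OF E1]) (use p in simp)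
  also have "\<dots> \<le> t * f s" by (rule E2)
  also have "\<dots> \<le> c * (1 - x) * f s" using T1 fs by (intro mult_right_mono)
  also have "\<dots> = (2 * c * f s) * ((1 - x) / 2)" by simp
  finally have "EE x * ((1 - x) / 2) \<le> (2 * c * f s) * ((1 - x) / 2)" .
  then have E3: "EE x \<le> 2 * c * f s" using p by simp
  have "gg x = wbb \<beta> x * EE x" by (simp add: gg_def)
  also have "\<dots> \<le> wbb \<beta> x * (2 * c * f s)" using E3 wbb_nonneg by (intro mult_left_mono)
  also have "\<dots> \<le> (2 powr \<beta> * wbb \<beta> s) * (2 * c * f s)" using W1 c0 fs by (intro mult_right_mono) auto
  also have "\<dots> = 2 powr \<beta> * 2 * c * (wbb \<beta> s * f s)" by (simp add: algebra_simps)
  also have "\<dots> \<le> 2 powr \<beta> * 2 * c * M" using ws c0 by (intro mult_left_mono) auto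
  also have "\<dots> = AA * h / sqrt u" using u by (simp add: AA_def c_def field_simps)
  finally show ?thesis .
qed

end


context cvx begin
lemma cont_comp: assumes "continuous_on S k" "\<And>x. x \<in> S \<Longrightarrow> -1 < k x \<and> k x < 1"
  shows "continuous_on S (\<lambda>x. f (k x))"
  by (rule continuous_on_compose2[OF cont assms(1)]) (use assms(2) in auto)
end

context mt begin

lemma cont_tt: "continuous_on S tt"
  unfolding tt_def phi_def by (intro continuous_intros)

lemma cont_wbb: assumes "\<And>x. x \<in> S \<Longrightarrow> -1 < x \<and> x < 1"
  shows "continuous_on S (wbb \<beta>)"
proof -
  have "\<And>x. x \<in> S \<Longrightarrow> 0 < 1 - x^2"
  proof -
    fix x assume "x \<in> S"
    then have "\<bar>x\<bar> < 1" using assms[of x] by (simp add: abs_less_iff)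
    then show "0 < 1 - x^2" by (simp add: abs_square_less_1)
  qed
  then show ?thesis unfolding wbb_def[abs_def]
    by (intro continuous_on_powr' continuous_intros) (auto dest: less_imp_le, fastforce)
qed

lemma cont_gg: "continuous_on {-1 + 8*h^2 .. 1 - 8*h^2} gg"
proof -
  let ?R = "{-1 + 8*h^2 .. 1 - 8*h^2}"
  have p: "\<And>x. x \<in> ?R \<Longrightarrow> -1 < x - tt x \<and> x - tt x < 1 \<and> -1 < x + tt x \<and> x + tt x < 1 \<and> -1 < x \<and> x < 1"
    using R_pts by fastforce
  have c1: "continuous_on ?R (\<lambda>x. f (x - tt x))"
    by (rule cont_comp) (use p in \<open>auto intro!: continuous_intros cont_tt\<close>)
  have c2: "continuous_on ?R (\<lambda>x. f (x + tt x))"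
    by (rule cont_comp) (use p in \<open>auto intro!: continuous_intros cont_tt\<close>)
  have c3: "continuous_on ?R (\<lambda>x. f x)"
    by (rule cont_comp[where k = "\<lambda>x. x"]) (use p in \<open>auto intro!: continuous_intros\<close>)
  have c4: "continuous_on ?R (wbb \<beta>)" by (rule cont_wbb) (use p in auto)
  show ?thesis unfolding gg_def[abs_def] EE_def
    by (intro continuous_intros c1 c2 c3 c4)
qed

lemma cont_ggq: assumes "0 < q" shows "continuous_on {-1 + 8*h^2 .. 1 - 8*h^2} (\<lambda>x. gg x powr q)"
  by (intro continuous_on_powr' cont_gg continuous_intros) (use gg_nonneg assms in auto)

lemma int_gg: assumes "{a..b} \<subseteq> {-1 + 8*h^2 .. 1 - 8*h^2}"
  shows "gg integrable_on {a..b}"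
  using integrable_continuous_real[OF continuous_on_subset[OF cont_gg assms]] .

lemma int_ggq: assumes "0 < q" "{a..b} \<subseteq> {-1 + 8*h^2 .. 1 - 8*h^2}"
  shows "(\<lambda>x. gg x powr q) integrable_on {a..b}"
  using integrable_continuous_real[OF continuous_on_subset[OF cont_ggq[OF assms(1)] assms(2)]] .

end


context mt begin

lemma h2_small: "8 * h^2 \<le> 1/2"
proof -
  have "h * h \<le> (1/4) * (1/4)" using h0 h1 by (intro mult_mono) auto
  then show ?thesis by (simp add: power2_eq_square)
qed

lemma piece_L1:
  assumes a: "0 \<le> a" "a = 1 - 2*u" and b: "b = 1 - u" and u: "16 * h^2 \<le> u"
  shows "integral {a..b} gg \<le> 16 powr \<beta> * (16/3) * M * h^2"
proof -
  have u0: "0 < u" using u h0 by (smt (verit) zero_less_power2)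
  have uh: "u \<le> 1/2" using a by simp
  define T where "T = 2 * h * sqrt u"
  have T0: "0 \<le> T" using h0 u0 by (simp add: T_def)
  have Tsq: "T^2 = 4 * h^2 * u" using u0 by (simp add: T_def power_mult_distrib)
  have Tu: "T \<le> u / 2"
  proof (rule power2_le_imp_le)
    have "4 * h^2 * u \<le> (u/4) * u" using u u0 by (intro mult_right_mono) auto
    then show "T^2 \<le> (u/2)^2" using Tsq by (simp add: power2_eq_square)
  qed (use u0 in simp)
  have R: "{a..b} \<subseteq> {-1 + 8*h^2 .. 1 - 8*h^2}" using a b u h2_small by auto
  have ab: "a \<le> b - T" using a b Tu u0 by simp
  define F where "F y = f (y + T) - f y" for y
  have inI: "\<And>y. a - T \<le> y \<Longrightarrow> y \<le> b \<Longrightarrow> -1 < y \<and> y + T < 1 \<and> y < 1 \<and> -1 < y + T"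
    using a b Tu uh u0 T0 by auto
  have Fnn: "\<And>y. a - T \<le> y \<Longrightarrow> y \<le> b \<Longrightarrow> 0 \<le> F y"
    unfolding F_def using inI T0 by (smt (verit) mono)
  have Fle: "\<And>y. a - T \<le> y \<Longrightarrow> y \<le> b \<Longrightarrow> F y \<le> F b"
    unfolding F_def using inI T0 by (intro incr) auto
  have contF: "continuous_on {a - T .. b} F"
    unfolding F_def using inI
    by (intro continuous_intros cont_comp) auto
  define W where "W = (4*u) powr \<beta>"
  have W0: "0 \<le> W" by (simp add: W_def)
  have ptw: "gg x \<le> W * (F x - F (x - T))" if x: "x \<in> {a..b}" for x
  proof -
    have xR: "-1 + 8*h^2 \<le> x" "x \<le> 1 - 8*h^2" using R x by auto
    note p = R_pts[OF xR]
    have tT: "tt x \<le> T"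
    proof (rule power2_le_imp_le)
      have "(tt x)^2 = h^2 * ((1 - x) * (1 + x))" using tt_sq p by simp
      also have "\<dots> \<le> h^2 * ((2*u) * 2)"
        by (intro mult_left_mono mult_mono) (use x a b p in auto)
      finally show "(tt x)^2 \<le> T^2" using Tsq by simp
    qed (rule T0)
    have i1: "-1 < x - T" "x + T < 1" using inI[of x] inI[of "x - T"] x T0 by auto
    have E: "EE x \<le> F x - F (x - T)"
      using step_mono[OF i1 p(5) tT] by (simp add: EE_def F_def)
    have w: "wbb \<beta> x \<le> W"
    proof -
      have "0 \<le> 1 - x^2" using p by (simp add: abs_square_le_1)
      moreover have "1 - x^2 \<le> 4 * u"
      proof -
        have "1 - x^2 = (1 - x) * (1 + x)" by (simp add: power2_eq_square algebra_simps)
        also have "\<dots> \<le> (2*u) * 2" by (intro mult_mono) (use x a b p in auto)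
        finally show ?thesis by simp
      qed
      ultimately show ?thesis unfolding wbb_def W_def using b0 by (intro powr_mono2) auto
    qed
    have "gg x = wbb \<beta> x * EE x" by (simp add: gg_def)
    also have "\<dots> \<le> W * EE x" by (rule mult_right_mono[OF w EE_nonneg[OF xR]])
    also have "\<dots> \<le> W * (F x - F (x - T))" by (rule mult_left_mono[OF E W0])
    finally show ?thesis .
  qed
  have iF: "F integrable_on {a - T .. b}" by (rule integrable_continuous_real[OF contF])
  have iF1: "F integrable_on {a .. b}" by (rule integrable_subinterval_real[OF iF]) (use T0 in auto)
  have iF2: "F integrable_on {a - T .. b - T}" by (rule integrable_subinterval_real[OF iF]) (use T0 in auto)
  have shift: "integral {a..b} (\<lambda>x. F (x - T)) = integral {a - T .. b - T} F"
    using integral_shift_Icc_real[of a b F "-T"] by (simp add: o_def add.commute)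
  have iF3: "(\<lambda>x. F (x - T)) integrable_on {a..b}"
  proof -
    have "(F \<circ> (+) (-T)) integrable_on {a..b}"
      using iF2 has_integral_shift_Icc_real[of F "-T" _ a b] by (auto simp: integrable_on_def)
    then show ?thesis by (simp add: o_def add.commute)
  qed
  have "integral {a..b} gg \<le> integral {a..b} (\<lambda>x. W * (F x - F (x - T)))"
    by (rule integral_le[OF int_gg[OF R]]) (use integrable_cmul[OF integrable_diff[OF iF1 iF3], of W] ptw in auto)
  also have "\<dots> = W * (integral {a..b} F - integral {a - T .. b - T} F)"
    using iF1 iF3 by (simp add: integral_diff shift)
  also have "integral {a..b} F = integral {a .. b - T} F + integral {b - T .. b} F"
    by (rule Henstock_Kurzweil_Integration.integral_combine[symmetric]) (use ab T0 iF1 in auto)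
  also have "integral {a - T .. b - T} F = integral {a - T .. a} F + integral {a .. b - T} F"
    by (rule Henstock_Kurzweil_Integration.integral_combine[symmetric]) (use ab T0 iF2 in auto)
  also have "integral {a .. b - T} F + integral {b - T .. b} F - (integral {a - T .. a} F + integral {a .. b - T} F)
      = integral {b - T .. b} F - integral {a - T .. a} F" by simp
  also have "\<dots> \<le> T * F b"
  proof -
    have "0 \<le> integral {a - T .. a} F"
      by (rule integral_nonneg) (use iF Fnn T0 ab in \<open>auto intro: integrable_subinterval_real\<close>)
    moreover have "integral {b - T .. b} F \<le> integral {b - T .. b} (\<lambda>_. F b)"
      by (rule integral_le) (use iF Fle T0 ab in \<open>auto intro: integrable_subinterval_real\<close>)
    moreover have "integral {b - T .. b} (\<lambda>_. F b) = T * F b" using T0 by simp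
    ultimately show ?thesis by linarith
  qed
  finally have I1: "integral {a..b} gg \<le> W * (T * F b)" using W0 by (simp add: mult_left_mono)
  define s where "s = 1 - u/4"
  have s: "b + T \<le> s" "s < 1" "0 \<le> s" using b Tu u0 uh by (auto simp: s_def)
  have bb: "-1 < b" using b uh by simp
  have ch: "f (b + T) * (s - b) \<le> (s - (b + T)) * f b + ((b + T) - b) * f s"
    using s bb T0 b u0 by (intro chord) (auto simp: s_def)
  have fb: "0 \<le> f b" using bb s b u0 by (intro nonneg) auto
  have fs: "0 \<le> f s" using s by (intro nonneg) auto
  have "F b * (s - b) \<le> T * f s - T * f b" using ch unfolding F_def by (simp add: algebra_simps)
  also have "\<dots> \<le> T * f s" using fb T0 by simp
  finally have Fb: "F b * (3*u/4) \<le> T * f s" by (simp add: s_def b)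
  have ws: "(u/4) powr \<beta> * f s \<le> M"
  proof -
    have "(u/4) powr \<beta> \<le> wbb \<beta> s"
    proof -
      have "u/4 \<le> 1 - s^2"
      proof -
        have "1 - s^2 = (u/4) * (1 + s)" by (simp add: s_def power2_eq_square algebra_simps)
        also have "\<dots> \<ge> (u/4) * 1" using s u0 by (intro mult_left_mono) auto
        finally show ?thesis by simp
      qed
      then show ?thesis unfolding wbb_def using b0 u0 by (intro powr_mono2) auto
    qed
    then have "(u/4) powr \<beta> * f s \<le> wbb \<beta> s * f s" using fs by (rule mult_right_mono)
    also have "\<dots> \<le> M" using wb[of s] s by auto
    finally show ?thesis .
  qed
  have WW: "W = 16 powr \<beta> * (u/4) powr \<beta>"
    unfolding W_def by (subst powr_mult[symmetric]) simp
  have "W * (T * F b) = 16 powr \<beta> * ((u/4) powr \<beta> * (T * F b))" by (simp add: WW)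
  also have "T * F b \<le> T * (T * f s / (3*u/4))"
    using Fb u0 T0 by (intro mult_left_mono) (simp_all add: field_simps)
  also have "T * (T * f s / (3*u/4)) = (16/3) * h^2 * f s"
    using u0 Tsq by (simp add: power2_eq_square field_simps)
  finally have "W * (T * F b) \<le> 16 powr \<beta> * ((u/4) powr \<beta> * ((16/3) * h^2 * f s))"
    by (simp add: mult_left_mono)
  also have "\<dots> = 16 powr \<beta> * (16/3) * h^2 * ((u/4) powr \<beta> * f s)" by (simp add: algebra_simps)
  also have "\<dots> \<le> 16 powr \<beta> * (16/3) * h^2 * M" using ws by (intro mult_left_mono) auto
  finally show ?thesis using I1 by (simp add: algebra_simps)
qed

end


context mt begin

lemma powq_split: fixes y q :: real assumes "0 \<le> y" "1 \<le> q" shows "y powr q = y powr (q - 1) * y"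
  using powr_add[of y "q - 1" 1] assms by simp

lemma piece_q:
  assumes a: "0 \<le> a" "a = 1 - 2*u" and b: "b = 1 - u" and u: "16 * h^2 \<le> u" and q: "1 \<le> q"
  shows "integral {a..b} (\<lambda>x. gg x powr q) \<le> (AA*h/sqrt u) powr (q-1) * (16 powr \<beta> * (16/3) * M * h^2)"
proof -
  have u0: "0 < u" using u h0 by (smt (verit) zero_less_power2)
  have R: "{a..b} \<subseteq> {-1 + 8*h^2 .. 1 - 8*h^2}" using a b u h2_small by auto
  define B where "B = AA*h/sqrt u"
  have ptw: "gg x powr q \<le> B powr (q-1) * gg x" if x: "x \<in> {a..b}" for x
  proof -
    have xR: "-1 + 8*h^2 \<le> x" "x \<le> 1 - 8*h^2" using R x by auto
    have g0: "0 \<le> gg x" by (rule gg_nonneg[OF xR])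
    have gB: "gg x \<le> B" unfolding B_def by (rule gg_bound[OF xR u0]) (use x b in auto)
    have "gg x powr q = gg x powr (q - 1) * gg x" by (rule powq_split[OF g0 q])
    also have "\<dots> \<le> B powr (q-1) * gg x"
      by (rule mult_right_mono[OF _ g0]) (rule powr_mono2, use q g0 gB in auto)
    finally show ?thesis .
  qed
  have "integral {a..b} (\<lambda>x. gg x powr q) \<le> integral {a..b} (\<lambda>x. B powr (q-1) * gg x)"
    by (rule integral_le) (use int_ggq[of q a b] R q int_gg[OF R] integrable_cmul[OF int_gg[OF R], of "B powr (q-1)"] ptw in auto)
  also have "\<dots> = B powr (q-1) * integral {a..b} gg" by simp
  also have "\<dots> \<le> B powr (q-1) * (16 powr \<beta> * (16/3) * M * h^2)"
    by (rule mult_left_mono[OF piece_L1[OF a b u]]) simp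
  finally show ?thesis unfolding B_def .
qed

definition vv :: "nat \<Rightarrow> real" where "vv n = (1/2)^n"

lemma vv_pos: "0 < vv n" by (simp add: vv_def)
lemma vv_le1: "vv n \<le> 1" by (simp add: vv_def power_le_one)
lemma vv_Suc: "vv n = 2 * vv (Suc n)" by (simp add: vv_def)

lemma powr_half: fixes x p :: real shows "(x / 2) powr (-p) = 2 powr p * x powr (-p)"
proof -
  have "(x/2) powr (-p) = x powr (-p) / 2 powr (-p)" by (rule powr_divide)
  also have "2 powr (-p) = 1 / 2 powr p" by (rule powr_minus_divide)
  finally show ?thesis by simp
qed

lemma piece_q':
  assumes a: "0 \<le> a" "a = 1 - 2*u" and b: "b = 1 - u" and u: "16 * h^2 \<le> u" and q: "1 \<le> q"
  shows "integral {a..b} (\<lambda>x. gg x powr q) \<le> ((AA*h) powr (q-1) * (16 powr \<beta> * (16/3) * M * h^2)) * u powr (-((q-1)/2))"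
proof -
  have u0: "0 < u" using u h0 by (smt (verit) zero_less_power2)
  have "(AA*h/sqrt u) powr (q-1) = (AA*h) powr (q-1) / (sqrt u) powr (q-1)" by (rule powr_divide)
  also have "(sqrt u) powr (q-1) = u powr ((q-1)/2)"
  proof -
    have "sqrt u = u powr (1/2)" using u0 by (simp add: powr_half_sqrt)
    then have "(sqrt u) powr (q-1) = u powr ((1/2) * (q-1))" by (simp add: powr_powr)
    then show ?thesis by simp
  qed
  also have "(AA*h) powr (q-1) / u powr ((q-1)/2) = (AA*h) powr (q-1) * u powr (-((q-1)/2))"
    by (simp add: powr_minus_divide)
  finally have e: "(AA*h/sqrt u) powr (q-1) = (AA*h) powr (q-1) * u powr (-((q-1)/2))" .
  show ?thesis using piece_q[OF a b u q] unfolding e by (simp add: algebra_simps)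
qed

end


context mt begin

definition pp :: "real \<Rightarrow> real" where "pp q = (q - 1) / 2"
definition rr :: "real \<Rightarrow> real" where "rr q = 2 powr pp q"
definition PP :: "real \<Rightarrow> real" where "PP q = (AA*h) powr (q-1) * (16 powr \<beta> * (16/3) * M * h^2)"
definition KK :: "real \<Rightarrow> real" where "KK q = PP q * rr q / (rr q - 1)"

lemma rr_gt: "1 < q \<Longrightarrow> 1 < rr q"
  unfolding rr_def pp_def by (simp add: powr_gt_zero)

lemma PP_nonneg: "0 \<le> PP q" unfolding PP_def using M0 h0 by simp

lemma KK_nonneg: "1 < q \<Longrightarrow> 0 \<le> KK q"
  unfolding KK_def using rr_gt[of q] PP_nonneg[of q] by simp

lemma KK_eq: "1 < q \<Longrightarrow> KK q + PP q * rr q = KK q * rr q"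
  unfolding KK_def using rr_gt[of q] by (simp add: field_simps)

lemma h16: "16 * h^2 \<le> 1"
  using h2_small by simp

lemma mid_ind:
  assumes q: "1 < q"
  shows "16*h^2 \<le> vv n \<Longrightarrow> integral {0 .. 1 - vv n} (\<lambda>x. gg x powr q) \<le> KK q * vv n powr (- pp q)"
proof (induction n)
  case 0
  then show ?case using KK_nonneg[OF q] by (simp add: vv_def)
next
  case (Suc n)
  have vS: "vv n = 2 * vv (Suc n)" by (rule vv_Suc)
  have v0: "0 < vv (Suc n)" by (rule vv_pos)
  have hn: "16*h^2 \<le> vv n" using Suc.prems vS v0 by linarith
  note IH = Suc.IH[OF hn]
  have hh0': "8*h^2 \<le> 16*h^2" by simp
  have hh0: "8*h^2 \<le> vv (Suc n)" using hh0' Suc.prems by linarith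
  have R: "{0 .. 1 - vv (Suc n)} \<subseteq> {-1 + 8*h^2 .. 1 - 8*h^2}" using Suc.prems h2_small hh0 by auto
  have int: "(\<lambda>x. gg x powr q) integrable_on {0 .. 1 - vv (Suc n)}" using int_ggq[OF _ R] q by simp
  have c: "integral {0 .. 1 - vv (Suc n)} (\<lambda>x. gg x powr q)
      = integral {0 .. 1 - vv n} (\<lambda>x. gg x powr q) + integral {1 - vv n .. 1 - vv (Suc n)} (\<lambda>x. gg x powr q)"
    by (rule Henstock_Kurzweil_Integration.integral_combine[symmetric]) (use vv_le1[of n] vS v0 int in auto)
  have pc: "integral {1 - vv n .. 1 - vv (Suc n)} (\<lambda>x. gg x powr q) \<le> PP q * vv (Suc n) powr (- pp q)"
    using piece_q'[of "1 - vv n" "vv (Suc n)" "1 - vv (Suc n)" q] vv_le1[of n] vS Suc.prems q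
    unfolding PP_def pp_def by simp
  have vp: "vv (Suc n) powr (- pp q) = rr q * vv n powr (- pp q)"
    using powr_half[of "vv n" "pp q"] vS unfolding rr_def by simp
  have "integral {0 .. 1 - vv (Suc n)} (\<lambda>x. gg x powr q) \<le> KK q * vv n powr (- pp q) + PP q * (rr q * vv n powr (- pp q))"
    using c IH pc unfolding vp by linarith
  also have "\<dots> = (KK q + PP q * rr q) * vv n powr (- pp q)" by (simp add: algebra_simps)
  also have "\<dots> = KK q * (rr q * vv n powr (- pp q))" using KK_eq[OF q] by simp
  finally show ?case using vp by simp
qed

lemma exN: "\<exists>N. 16*h^2 \<le> vv N \<and> vv N < 32*h^2"
proof -
  have hp: "0 < 16*h^2" using h0 by simp
  obtain m where m: "(1/2::real)^m < 16*h^2" using real_arch_pow_inv[OF hp, of "1/2"] by auto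
  define m0 where "m0 = (LEAST m. vv m < 16*h^2)"
  have m0: "vv m0 < 16*h^2" unfolding m0_def by (rule LeastI[of _ m]) (use m in \<open>simp add: vv_def\<close>)
  have m00: "m0 \<noteq> 0"
  proof
    assume "m0 = 0"
    then have "vv m0 = 1" by (simp add: vv_def)
    then show False using m0 h16 by simp
  qed
  then obtain N where N: "m0 = Suc N" by (cases m0) auto
  have "\<not> vv N < 16*h^2" unfolding m0_def by (rule not_less_Least) (use N m0_def in simp)
  moreover have "vv N < 32*h^2" using vv_Suc[of N] m0 N by simp
  ultimately show ?thesis by (intro exI[of _ N]) (simp add: not_less)
qed

lemma mid_bound:
  assumes q: "1 < q" and N: "16*h^2 \<le> vv N"
  shows "integral {0 .. 1 - vv N} (\<lambda>x. gg x powr q) \<le> KK q * (16*h^2) powr (- pp q)"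
proof -
  have "vv N powr (- pp q) \<le> (16*h^2) powr (- pp q)"
    by (rule powr_mono2') (use q N h0 in \<open>auto simp: pp_def\<close>)
  then show ?thesis using mid_ind[OF q N] KK_nonneg[OF q] by (meson mult_left_mono order_trans)
qed

end


context mt begin

definition a0 :: real where "a0 = 2 * sqrt 2 * 2 powr \<beta>"
definition kappa :: "real \<Rightarrow> real" where
  "kappa q = 33 * a0 powr q + rr q / (rr q - 1) * (16 powr \<beta> * (16/3)) * (a0/4) powr (q-1)"

lemma AA_a0: "AA = a0 * M" by (simp add: AA_def a0_def)

lemma total:
  assumes q: "1 < q"
  shows "integral {-1 + 8*h^2 .. 1 - 8*h^2} (\<lambda>x. gg x powr q) \<le> kappa q * M powr q * h^2"
proof -
  obtain N where N: "16*h^2 \<le> vv N" "vv N < 32*h^2" using exN by blast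
  let ?g = "\<lambda>x. gg x powr q"
  let ?a = "-1 + 8*h^2" and ?e = "1 - 8*h^2" and ?c = "1 - vv N"
  have hh: "0 \<le> h^2" "8*h^2 \<le> 1/2" using h2_small by auto
  have o1: "?a \<le> -h" using hh h1 by linarith
  have o2: "-h \<le> 0" using h0 by simp
  have o3: "0 \<le> ?c" using vv_le1[of N] by simp
  have o4: "?c \<le> ?e" using N hh by linarith
  have intR: "?g integrable_on {?a .. ?e}" using int_ggq[of q ?a ?e] q by simp
  have sub: "\<And>l r. ?a \<le> l \<Longrightarrow> r \<le> ?e \<Longrightarrow> ?g integrable_on {l .. r}"
    by (rule integrable_subinterval_real[OF intR]) auto
  have split: "integral {?a .. ?e} ?g = integral {?a .. -h} ?g + integral {-h .. 0} ?g + integral {0 .. ?c} ?g + integral {?c .. ?e} ?g"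
  proof -
    have "integral {?a .. ?e} ?g = integral {?a .. ?c} ?g + integral {?c .. ?e} ?g"
      by (rule Henstock_Kurzweil_Integration.integral_combine[symmetric]) (use o1 o2 o3 o4 intR in auto)
    moreover have "integral {?a .. ?c} ?g = integral {?a .. 0} ?g + integral {0 .. ?c} ?g"
      by (rule Henstock_Kurzweil_Integration.integral_combine[symmetric]) (use o1 o2 o3 o4 sub in auto)
    moreover have "integral {?a .. 0} ?g = integral {?a .. -h} ?g + integral {-h .. 0} ?g"
      by (rule Henstock_Kurzweil_Integration.integral_combine[symmetric]) (use o1 o2 o3 o4 sub in auto)
    ultimately show ?thesis by simp
  qed
  have P1: "integral {?a .. -h} ?g \<le> 0"
  proof -
    have "integral {?a .. -h} ?g \<le> integral {?a .. -h} (\<lambda>_. 0::real)"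
    proof (rule integral_le)
      show "?g integrable_on {?a .. -h}" using sub o1 o2 o3 o4 by auto
      fix x assume x: "x \<in> {?a .. -h}"
      then have "EE x = 0" by (intro EE_zero) auto
      then show "?g x \<le> 0" by (simp add: gg_def)
    qed (rule integrable_0)
    then show ?thesis by simp
  qed
  have P2: "integral {-h .. 0} ?g \<le> (AA*h) powr q * h"
  proof -
    have "integral {-h .. 0} ?g \<le> integral {-h .. 0} (\<lambda>_. (AA*h) powr q)"
    proof (rule integral_le)
      show "?g integrable_on {-h .. 0}" using sub o1 o2 o3 o4 by auto
      fix x assume x: "x \<in> {-h .. 0}"
      then have xR: "?a \<le> x" "x \<le> ?e" using o1 o3 o4 by auto
      have "gg x \<le> AA * h / sqrt 1" by (rule gg_bound[OF xR]) (use x in auto)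
      then show "?g x \<le> (AA*h) powr q" using gg_nonneg[OF xR] q by (intro powr_mono2) auto
    qed (rule integrable_const_ivl)
    then show ?thesis using h0 by (simp add: mult.commute)
  qed
  have P4: "integral {?c .. ?e} ?g \<le> AA powr q * (32*h^2)"
  proof -
    have "integral {?c .. ?e} ?g \<le> integral {?c .. ?e} (\<lambda>_. AA powr q)"
    proof (rule integral_le)
      show "?g integrable_on {?c .. ?e}" using sub o1 o2 o3 o4 by auto
      fix x assume x: "x \<in> {?c .. ?e}"
      then have xR: "?a \<le> x" "x \<le> ?e" using o1 o2 o3 by auto
      have hp: "0 < 8*h^2" using h0 by simp
      have "gg x \<le> AA * h / sqrt (8*h^2)" by (rule gg_bound[OF xR hp]) (use x in auto)
      also have "\<dots> \<le> AA"
      proof -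
        have "h \<le> sqrt (8*h^2)"
        proof -
          have "sqrt (h^2) \<le> sqrt (8*h^2)" by (intro real_sqrt_le_mono) simp
          then show ?thesis using h0 by simp
        qed
        then have "AA * h \<le> AA * sqrt (8*h^2)" using AA0 by (rule mult_left_mono)
        then show ?thesis using hp by (simp add: divide_le_eq)
      qed
      finally show "?g x \<le> AA powr q" using gg_nonneg[OF xR] q by (intro powr_mono2) auto
    qed (rule integrable_const_ivl)
    also have "\<dots> = (?e - ?c) * AA powr q" using o4 by simp
    also have "\<dots> \<le> (32*h^2) * AA powr q" using N by (intro mult_right_mono) auto
    also have "\<dots> = AA powr q * (32*h^2)" by (rule mult.commute)
    finally show ?thesis .
  qed
  have P3: "integral {0 .. ?c} ?g \<le> KK q * (16*h^2) powr (- pp q)" by (rule mid_bound[OF q N(1)])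
  have Mq: "M powr (q - 1) * M = M powr q" using powq_split[OF M0, of q] q by simp
  have e3: "KK q * (16*h^2) powr (- pp q) = rr q / (rr q - 1) * (16 powr \<beta> * (16/3)) * (a0/4) powr (q-1) * M powr q * h^2"
  proof -
    have s: "(16*h^2) powr (- pp q) = (4*h) powr (-(q-1))"
    proof -
      have "16*h^2 = (4*h) powr 2" using h0 by (simp add: powr_numeral power2_eq_square)
      then have "(16*h^2) powr (- pp q) = (4*h) powr (2 * (- pp q))" by (simp only: powr_powr)
      moreover have "2 * (- pp q) = -(q-1)" unfolding pp_def by (simp add: field_simps)
      ultimately show ?thesis by simp
    qed
    have t: "(AA*h) powr (q-1) * (4*h) powr (-(q-1)) = (a0/4) powr (q-1) * M powr (q-1)"
    proof -
      have "(AA*h) powr (q-1) * (4*h) powr (-(q-1)) = (AA*h) powr (q-1) / (4*h) powr (q-1)"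
        by (simp only: powr_minus_divide) simp
      also have "\<dots> = (AA*h / (4*h)) powr (q-1)" by (rule powr_divide[symmetric])
      also have "AA*h / (4*h) = (a0/4) * M" using h0 by (simp add: AA_a0)
      also have "((a0/4) * M) powr (q-1) = (a0/4) powr (q-1) * M powr (q-1)" by (rule powr_mult)
      finally show ?thesis .
    qed
    have "KK q * (16*h^2) powr (- pp q) = rr q / (rr q - 1) * (16 powr \<beta> * (16/3)) * M * h^2 * ((AA*h) powr (q-1) * (4*h) powr (-(q-1)))"
      unfolding KK_def PP_def s by (simp add: algebra_simps)
    also have "\<dots> = rr q / (rr q - 1) * (16 powr \<beta> * (16/3)) * (a0/4) powr (q-1) * (M powr (q-1) * M) * h^2"
      unfolding t by (simp add: algebra_simps)
    finally show ?thesis unfolding Mq .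
  qed
  have e1: "(AA*h) powr q * h \<le> a0 powr q * M powr q * h^2"
  proof -
    have "h powr q \<le> h powr 1" using h0 h1 q by (intro powr_mono') auto
    then have "h powr q \<le> h" using h0 by simp
    then have "(AA*h) powr q * h = a0 powr q * M powr q * (h powr q * h)"
      by (simp add: AA_a0 powr_mult)
    also have "\<dots> \<le> a0 powr q * M powr q * (h * h)"
      using \<open>h powr q \<le> h\<close> h0 by (intro mult_left_mono mult_right_mono) auto
    finally show ?thesis by (simp add: power2_eq_square)
  qed
  have e4: "AA powr q * (32*h^2) = 32 * a0 powr q * M powr q * h^2" by (simp add: AA_a0 powr_mult)
  have "integral {?a .. ?e} ?g \<le> a0 powr q * M powr q * h^2
      + rr q / (rr q - 1) * (16 powr \<beta> * (16/3)) * (a0/4) powr (q-1) * M powr q * h^2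
      + 32 * a0 powr q * M powr q * h^2"
    using split P1 P2 P3 P4 e1 e3 e4 by linarith
  also have "\<dots> = kappa q * M powr q * h^2" by (simp add: kappa_def algebra_simps)
  finally show ?thesis .
qed

end


context mt begin

lemma main_Lq:
  assumes q: "1 < q"
  shows "Lq_norm {-1 + 8*h^2 .. 1 - 8*h^2} q (\<lambda>x. wbb \<beta> x * Delta2 f (h * phi x) x)
         \<le> ennreal (kappa q powr (1/q) * M * h powr (2/q))"
proof -
  have ab: "-1 + 8*h^2 \<le> 1 - 8*h^2" using h2_small by simp
  have L: "Lq_norm {-1 + 8*h^2 .. 1 - 8*h^2} q (\<lambda>x. wbb \<beta> x * Delta2 f (h * phi x) x)
     \<le> ennreal ((kappa q * M powr q * h^2) powr (1/q))"
  proof (rule Lq_int[OF _ ab _ cont_ggq total[OF q]])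
    show "0 < q" using q by simp
    show "0 < q" using q by simp
    fix x assume x: "x \<in> {-1 + 8*h^2 .. 1 - 8*h^2}"
    then have xR: "-1 + 8*h^2 \<le> x" "x \<le> 1 - 8*h^2" by auto
    show "\<bar>wbb \<beta> x * Delta2 f (h * phi x) x\<bar> powr q = gg x powr q"
      using Delta_eq[OF xR] gg_nonneg[OF xR] by (simp add: gg_def)
  qed
  have "(kappa q * M powr q * h^2) powr (1/q) = kappa q powr (1/q) * (M powr q) powr (1/q) * (h^2) powr (1/q)"
    by (simp add: powr_mult)
  also have "(M powr q) powr (1/q) = M" using q M0 by (simp add: powr_powr)
  also have "(h^2) powr (1/q) = h powr (2/q)"
  proof -
    have "h^2 = h powr 2" using h0 by (simp add: powr_numeral)
    then show ?thesis by (simp add: powr_powr)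
  qed
  finally show ?thesis using L by simp
qed

end

context cvxw begin

lemma zero_neg: assumes b: "\<beta> < 0" and y: "-1 < y" "y < 1" shows "f y = 0"
proof (rule ccontr)
  assume ne: "f y \<noteq> 0"
  have fy: "0 < f y" using nonneg[OF y] ne by simp
  have y0: "0 < y" using z[of y] y ne by force
  define K where "K = M / f y + 1"
  have K0: "1 \<le> K" using M0 fy by (simp add: K_def)
  define e where "e = min (1 - y^2) (K powr (1/\<beta>))"
  have y2: "y^2 < 1" using y by (simp add: abs_square_less_1 abs_less_iff)
  have e0: "0 < e" using y2 K0 by (simp add: e_def)
  have e1: "e \<le> 1 - y^2" by (simp add: e_def)
  have eK: "K \<le> e powr \<beta>"
  proof -
    have "(K powr (1/\<beta>)) powr \<beta> \<le> e powr \<beta>"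
      by (rule powr_mono2') (use b e0 in \<open>auto simp: e_def\<close>)
    moreover have "(K powr (1/\<beta>)) powr \<beta> = K" using b K0 by (simp add: powr_powr)
    ultimately show ?thesis by simp
  qed
  define w where "w = sqrt (1 - e)"
  have e2: "e \<le> 1" using e1 zero_le_power2[of y] by linarith
  have w1: "w^2 = 1 - e" using e2 by (simp add: w_def)
  have wy: "y \<le> w" unfolding w_def using e1 y0 by (intro real_le_rsqrt) (simp add: power2_eq_square)
  have wlt: "w < 1" unfolding w_def using e0 by simp
  have fw: "f y \<le> f w" using y wy wlt by (intro mono) auto
  have "wbb \<beta> w = e powr \<beta>" using w1 by (simp add: wbb_def)
  then have "K * f y \<le> wbb \<beta> w * f w" using eK fw fy
    by (metis mult_mono less_imp_le powr_ge_zero)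
  also have "\<dots> \<le> M" using wb[of w] y wy wlt by auto
  finally have "K * f y \<le> M" .
  moreover have "K * f y = M + f y" using fy by (simp add: K_def field_simps)
  ultimately show False using fy by simp
qed

end


definition kapg :: "real \<Rightarrow> real \<Rightarrow> real" where
  "kapg \<beta> q = 33 * (2 * sqrt 2 * 2 powr \<beta>) powr q
     + 2 powr ((q - 1) / 2) / (2 powr ((q - 1) / 2) - 1) * (16 powr \<beta> * (16/3)) * ((2 * sqrt 2 * 2 powr \<beta>)/4) powr (q-1)"

lemma (in mt) kappa_eq: "kappa q = kapg \<beta> q"
  by (simp add: kappa_def kapg_def a0_def rr_def pp_def)

lemma d8: fixes \<delta> :: real assumes "0 < \<delta>" "\<delta> \<le> 1/4" shows "8 * \<delta>^2 \<le> 1/2"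
proof -
  have "\<delta> * \<delta> \<le> (1/4) * (1/4)" using assms by (intro mult_mono) auto
  then show ?thesis by (simp add: power2_eq_square)
qed

lemma d8pow: fixes \<delta> q :: real assumes "0 < \<delta>" "0 < q"
  shows "(8 * \<delta>^2) powr (1/q) = 8 powr (1/q) * \<delta> powr (2/q)"
proof -
  have a: "(8 * \<delta>^2) powr (1/q) = 8 powr (1/q) * (\<delta>^2) powr (1/q)" by (rule powr_mult)
  have "\<delta>^2 = \<delta> powr 2" using assms by (simp add: powr_numeral)
  then have b: "(\<delta>^2) powr (1/q) = \<delta> powr (2/q)" by (simp add: powr_powr)
  show ?thesis using a b by simp
qed

theorem lemma5p3:
  fixes \<beta> q :: real
  assumes "1 < q"
  shows "\<exists>c>0. \<forall>f \<delta>. in_M2plus f \<longrightarrow> in_W_inf \<beta> f \<longrightarrow> 0 < \<delta> \<longrightarrow> \<delta> \<le> 1/4 \<longrightarrow>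
           omega_phi2 \<beta> q f \<delta> \<le> ennreal (c * \<delta> powr (2 / q) * wsup_norm \<beta> f)"
proof -
  have q: "1 < q" by (rule assms)
  have q0: "0 < q" using q by simp
  define c where "c = kapg \<beta> q powr (1/q) + 3 * (1 / (3/4) powr \<beta>) * 8 powr (1/q) + 2 * 8 powr (1/q) + 1"
  have c0: "0 < c" unfolding c_def by (intro add_nonneg_pos add_nonneg_nonneg) auto
  show ?thesis
  proof (intro exI[of _ c] conjI allI impI)
    show "0 < c" by (rule c0)
    fix f :: "real \<Rightarrow> real" and \<delta> :: real
    assume fM: "in_M2plus f" and fW: "in_W_inf \<beta> f" and d0: "0 < \<delta>" and d1: "\<delta> \<le> 1/4"
    define M where "M = wsup_norm \<beta> f"
    have wbM: "wbb \<beta> y * f y \<le> M" if "-1 < y" "y < 1" for y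
    proof -
      have "\<bar>wbb \<beta> y * f y\<bar> \<le> (SUP x\<in>{-1<..<1}. \<bar>wbb \<beta> x * f x\<bar>)"
        by (rule cSUP_upper) (use that fW in \<open>auto simp: in_W_inf_def\<close>)
      then show ?thesis unfolding M_def wsup_norm_def by linarith
    qed
    interpret cvxw f \<beta> M
    proof
      show "convex_on {-1<..<1} f" using fM by (simp add: in_M2plus_def)
      show "\<And>x. -1 < x \<Longrightarrow> x \<le> 0 \<Longrightarrow> f x = 0" using fM by (simp add: in_M2plus_def)
      show "\<And>y. -1 < y \<Longrightarrow> y < 1 \<Longrightarrow> wbb \<beta> y * f y \<le> M" by (rule wbM)
    qed
    define D where "D = \<delta> powr (2/q)"
    have D0: "0 \<le> D" by (simp add: D_def)
    have d8': "(8 * \<delta>^2) powr (1/q) = 8 powr (1/q) * D" unfolding D_def by (rule d8pow[OF d0 q0])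
    have dd: "8 * \<delta>^2 \<le> 1/2" by (rule d8[OF d0 d1])
    show "omega_phi2 \<beta> q f \<delta> \<le> ennreal (c * \<delta> powr (2 / q) * wsup_norm \<beta> f)"
    proof (cases "0 \<le> \<beta>")
      case True
      have Om: "Omega_main \<beta> q f \<delta> \<le> ennreal (kapg \<beta> q powr (1/q) * M * D)"
        unfolding Omega_main_def
      proof (rule SUP_least)
        fix h assume h: "h \<in> {0<..\<delta>}"
        interpret mt f \<beta> M h by unfold_locales (use True h d1 in auto)
        have "Lq_norm {-1 + 8 * h\<^sup>2 .. 1 - 8 * h\<^sup>2} q (\<lambda>x. wbb \<beta> x * Delta2 f (h * phi x) x)
             \<le> ennreal (kappa q powr (1/q) * M * h powr (2/q))" by (rule main_Lq[OF q])
        also have "\<dots> \<le> ennreal (kapg \<beta> q powr (1/q) * M * D)"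
        proof (rule ennreal_leI)
          have "h powr (2/q) \<le> D" unfolding D_def using h q0 by (intro powr_mono2) auto
          then show "kappa q powr (1/q) * M * h powr (2/q) \<le> kapg \<beta> q powr (1/q) * M * D"
            unfolding kappa_eq using M0 by (intro mult_left_mono) auto
        qed
        finally show "Lq_norm {-1 + 8 * h\<^sup>2 .. 1 - 8 * h\<^sup>2} q (\<lambda>x. wbb \<beta> x * Delta2 f (h * phi x) x)
             \<le> ennreal (kapg \<beta> q powr (1/q) * M * D)" .
      qed
      have Of: "Omega_fwd \<beta> q f \<delta> \<le> ennreal (3 * (M / (3/4) powr \<beta>) * (8 powr (1/q) * D))"
        unfolding Omega_fwd_def
      proof (rule SUP_least)
        fix h assume h: "h \<in> {0<..8 * \<delta>^2}"
        have "Lq_norm {-1 .. -1 + 8 * \<delta>^2} q (\<lambda>x. wbb \<beta> x * Delta2_fwd f h x)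
            \<le> ennreal (3 * (M / (3/4) powr \<beta>) * ((-1 + 8 * \<delta>^2) - (-1)) powr (1/q))"
          by (rule Lq_pt[OF q0]) (use M0 h d0 d1 True fwd_pt in auto)
        then show "Lq_norm {-1 .. -1 + 8 * \<delta>^2} q (\<lambda>x. wbb \<beta> x * Delta2_fwd f h x)
            \<le> ennreal (3 * (M / (3/4) powr \<beta>) * (8 powr (1/q) * D))" using d8' by simp
      qed
      have Ob: "Omega_bwd \<beta> q f \<delta> \<le> ennreal (2 * M * (8 powr (1/q) * D))"
        unfolding Omega_bwd_def
      proof (rule SUP_least)
        fix h assume h: "h \<in> {0<..8 * \<delta>^2}"
        have "Lq_norm {1 - 8 * \<delta>^2 .. 1} q (\<lambda>x. wbb \<beta> x * Delta2_bwd f h x)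
            \<le> ennreal (2 * M * (1 - (1 - 8 * \<delta>^2)) powr (1/q))"
          by (rule Lq_pt[OF q0]) (use M0 h d0 d1 bwd_pt in auto)
        then show "Lq_norm {1 - 8 * \<delta>^2 .. 1} q (\<lambda>x. wbb \<beta> x * Delta2_bwd f h x)
            \<le> ennreal (2 * M * (8 powr (1/q) * D))" using d8' by simp
      qed
      have "omega_phi2 \<beta> q f \<delta> \<le> ennreal (kapg \<beta> q powr (1/q) * M * D)
           + ennreal (3 * (M / (3/4) powr \<beta>) * (8 powr (1/q) * D)) + ennreal (2 * M * (8 powr (1/q) * D))"
        unfolding omega_phi2_def using Om Of Ob by (intro add_mono) auto
      also have "\<dots> = ennreal (kapg \<beta> q powr (1/q) * M * D
           + 3 * (M / (3/4) powr \<beta>) * (8 powr (1/q) * D) + 2 * M * (8 powr (1/q) * D))"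
        using M0 D0 by (simp add: ennreal_plus)
      also have "\<dots> \<le> ennreal (c * \<delta> powr (2 / q) * wsup_norm \<beta> f)"
      proof (rule ennreal_leI)
        have "c * \<delta> powr (2 / q) * wsup_norm \<beta> f = kapg \<beta> q powr (1/q) * M * D
           + 3 * (M / (3/4) powr \<beta>) * (8 powr (1/q) * D) + 2 * M * (8 powr (1/q) * D) + D * M"
          unfolding c_def D_def M_def by (simp add: algebra_simps)
        then show "kapg \<beta> q powr (1/q) * M * D
           + 3 * (M / (3/4) powr \<beta>) * (8 powr (1/q) * D) + 2 * M * (8 powr (1/q) * D)
           \<le> c * \<delta> powr (2 / q) * wsup_norm \<beta> f" using D0 M0 by simp
      qed
      finally show ?thesis .
    next
      case False
      then have bn: "\<beta> < 0" by simp
      have fz: "\<And>y. -1 < y \<Longrightarrow> y < 1 \<Longrightarrow> f y = 0" using zero_neg[OF bn] by blast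
      have Om: "Omega_main \<beta> q f \<delta> \<le> 0"
        unfolding Omega_main_def
      proof (rule SUP_least)
        fix h assume h: "h \<in> {0<..\<delta>}"
        interpret m0: mt f 0 0 h by unfold_locales (use h d1 fz in auto)
        have "Lq_norm {-1 + 8 * h\<^sup>2 .. 1 - 8 * h\<^sup>2} q (\<lambda>x. wbb \<beta> x * Delta2 f (h * phi x) x)
            \<le> ennreal (0 * ((1 - 8 * h\<^sup>2) - (-1 + 8 * h\<^sup>2)) powr (1/q))"
        proof (rule Lq_pt[OF q0])
          show "-1 + 8 * h\<^sup>2 \<le> 1 - 8 * h\<^sup>2" using m0.h2_small by simp
          fix x assume x: "x \<in> {-1 + 8 * h\<^sup>2 .. 1 - 8 * h\<^sup>2}"
          then have xR: "-1 + 8 * h\<^sup>2 \<le> x" "x \<le> 1 - 8 * h\<^sup>2" by auto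
          note p = m0.R_pts[OF xR]
          have "Delta2 f (h * phi x) x = 0" unfolding m0.Delta_eq[OF xR] m0.EE_def
            using p fz by simp
          then show "\<bar>wbb \<beta> x * Delta2 f (h * phi x) x\<bar> \<le> 0" by simp
        qed simp
        then show "Lq_norm {-1 + 8 * h\<^sup>2 .. 1 - 8 * h\<^sup>2} q (\<lambda>x. wbb \<beta> x * Delta2 f (h * phi x) x) \<le> 0" by simp
      qed
      have Of: "Omega_fwd \<beta> q f \<delta> \<le> 0"
        unfolding Omega_fwd_def
      proof (rule SUP_least)
        fix h assume h: "h \<in> {0<..8 * \<delta>^2}"
        have "Lq_norm {-1 .. -1 + 8 * \<delta>^2} q (\<lambda>x. wbb \<beta> x * Delta2_fwd f h x)
            \<le> ennreal (0 * ((-1 + 8 * \<delta>^2) - (-1)) powr (1/q))"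
        proof (rule Lq_pt[OF q0])
          fix x assume x: "x \<in> {-1 .. -1 + 8 * \<delta>^2}"
          show "\<bar>wbb \<beta> x * Delta2_fwd f h x\<bar> \<le> 0"
          proof (cases "x = -1")
            case True then show ?thesis by (simp add: wbb_one)
          next
            case False
            then have x1: "-1 < x" "x + h + h < 1" using x h dd by auto
            then have "Delta2_fwd f h x = 0" unfolding Delta2_fwd_def Delta2_def
              using fz[of x] fz[of "x + h"] fz[of "x + h + h"] h by auto
            then show ?thesis by simp
          qed
        qed (use d0 in simp_all)
        then show "Lq_norm {-1 .. -1 + 8 * \<delta>^2} q (\<lambda>x. wbb \<beta> x * Delta2_fwd f h x) \<le> 0" by simp
      qed
      have Ob: "Omega_bwd \<beta> q f \<delta> \<le> 0"
        unfolding Omega_bwd_def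
      proof (rule SUP_least)
        fix h assume h: "h \<in> {0<..8 * \<delta>^2}"
        have "Lq_norm {1 - 8 * \<delta>^2 .. 1} q (\<lambda>x. wbb \<beta> x * Delta2_bwd f h x)
            \<le> ennreal (0 * (1 - (1 - 8 * \<delta>^2)) powr (1/q))"
        proof (rule Lq_pt[OF q0])
          fix x assume x: "x \<in> {1 - 8 * \<delta>^2 .. 1}"
          show "\<bar>wbb \<beta> x * Delta2_bwd f h x\<bar> \<le> 0"
          proof (cases "x = 1")
            case True then show ?thesis by (simp add: wbb_one)
          next
            case False
            then have x1: "x < 1" "-1 < x - h - h" using x h dd by auto
            then have "Delta2_bwd f h x = 0" unfolding Delta2_bwd_def Delta2_def
              using fz[of x] fz[of "x - h"] fz[of "x - h - h"] h by auto
            then show ?thesis by simp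
          qed
        qed (use d0 in simp_all)
        then show "Lq_norm {1 - 8 * \<delta>^2 .. 1} q (\<lambda>x. wbb \<beta> x * Delta2_bwd f h x) \<le> 0" by simp
      qed
      have "omega_phi2 \<beta> q f \<delta> \<le> 0 + 0 + 0"
        unfolding omega_phi2_def using Om Of Ob by (intro add_mono) auto
      then show ?thesis by simp
    qed
  qed
qed


end
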